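(* For each integer $n\geq 4$, $prc(W_n)=n$, where $W_n$ is the wheel on $n+1$ vertices.
   Context: The wheel $W_n=C_n+K_1$ is the join of a cycle $C_n$ with a single vertex (adjacent to all cycle vertices). A path in an edge-coloured graph is a rainbow path if its edges receive pairwise distinct colours. The proper rainbow connection number $prc(G)$ is the minimum number of colours in a proper edge-colouring (adjacent edges get distinct colours) such that every two distinct vertices are joined by a rainbow path. *)

theory Defs
  imports Main
begin

text \<open>A simple graph is given by a vertex set and a set of edges, each edge a 2-element set.\<close>

type_synonym 'a graph = "'a set \<times> 'a set set"

definition verts :: "'a graph \<Rightarrow> 'a set" where "verts G = fst G"
definition edges :: "'a graph \<Rightarrow> 'a set set" where "edges G = snd G"

definition wheel :: "nat \<Rightarrow> nat graph" where
  "wheel n = ({0..n},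
     {{i, (i + 1) mod n} | i. i < n} \<union> {{i, n} | i. i < n})"

definition proper_edge_colouring :: "'a graph \<Rightarrow> ('a set \<Rightarrow> nat) \<Rightarrow> bool" where
  "proper_edge_colouring G c \<longleftrightarrow>
     (\<forall>e\<in>edges G. \<forall>f\<in>edges G. e \<noteq> f \<and> e \<inter> f \<noteq> {} \<longrightarrow> c e \<noteq> c f)"

definition path_edges :: "'a list \<Rightarrow> 'a set list" where
  "path_edges p = map (\<lambda>(x, y). {x, y}) (zip p (tl p))"

definition is_path :: "'a graph \<Rightarrow> 'a \<Rightarrow> 'a \<Rightarrow> 'a list \<Rightarrow> bool" where
  "is_path G u v p \<longleftrightarrow> p \<noteq> [] \<and> hd p = u \<and> last p = v \<and> distinct p \<and>
     set p \<subseteq> verts G \<and> set (path_edges p) \<subseteq> edges G"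

definition rainbow_path :: "'a graph \<Rightarrow> ('a set \<Rightarrow> nat) \<Rightarrow> 'a \<Rightarrow> 'a \<Rightarrow> 'a list \<Rightarrow> bool" where
  "rainbow_path G c u v p \<longleftrightarrow> is_path G u v p \<and> distinct (map c (path_edges p))"

definition rainbow_connected :: "'a graph \<Rightarrow> ('a set \<Rightarrow> nat) \<Rightarrow> bool" where
  "rainbow_connected G c \<longleftrightarrow>
     (\<forall>u\<in>verts G. \<forall>v\<in>verts G. u \<noteq> v \<longrightarrow> (\<exists>p. rainbow_path G c u v p))"

definition proper_rainbow_colouring :: "'a graph \<Rightarrow> nat \<Rightarrow> ('a set \<Rightarrow> nat) \<Rightarrow> bool" where
  "proper_rainbow_colouring G k c \<longleftrightarrow>
     proper_edge_colouring G c \<and> c ` edges G \<subseteq> {..<k} \<and> rainbow_connected G c"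

definition prc :: "'a graph \<Rightarrow> nat" where
  "prc G = (LEAST k. \<exists>c. proper_rainbow_colouring G k c)"

end

theory Submission imports Defs begin
definition wc :: "nat \<Rightarrow> nat set \<Rightarrow> nat" where
  "wc n e = (if n \<in> e then Min (e - {n}) else if e = {n-1, 0} then 1 else (Min e + 2) mod n)"
lemma wc_spoke: "i < n \<Longrightarrow> wc n {i, n} = i"
proof -
  assume "i < n"
  then have "{i,n} - {n} = {i}" by auto
  then show ?thesis unfolding wc_def by simp
qed

lemma sucn_mod: assumes "n \<ge> (2::nat)" shows "(1 + n) mod n = 1"
proof -
  have "(1 + n) mod n = 1 mod n" by (rule mod_add_self2)
  then show ?thesis using assms by simp
qed

lemma wc_rim: assumes "i < n" "n \<ge> 4" shows "wc n {i, Suc i mod n} = (i + 2) mod n"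
proof (cases "i = n - 1")
  case True
  then have "Suc i mod n = 0" using assms by simp
  moreover have "(i+2) mod n = 1"
  proof -
    have "i + 2 = 1 + n" using True assms by simp
    then show ?thesis using assms sucn_mod[of n] by simp
  qed
  moreover have "n \<notin> {i, 0}" using assms by auto
  ultimately show ?thesis using True unfolding wc_def by (simp add: insert_commute)
next
  case False
  then have s: "Suc i mod n = Suc i" using assms by simp
  have "{i, Suc i} \<noteq> {n-1, 0}" using False assms by (auto simp: doubleton_eq_iff)
  moreover have "n \<notin> {i, Suc i}" using False assms by auto
  ultimately show ?thesis unfolding wc_def s by simp
qed

lemma mod_facts: assumes "i < n" "n \<ge> (4::nat)"
  shows "(i + 2) mod n \<noteq> i \<and> (i + 2) mod n \<noteq> Suc i mod n"
proof -
  consider "i + 2 < n" | "i + 2 = n" | "i + 1 = n" using assms by linarith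
  then show ?thesis
  proof cases
    case 1 then show ?thesis by simp
  next
    case 2 then show ?thesis using assms by auto
  next
    case 3 
    then have "i + 2 = 1 + n" by simp
    then have "(i + 2) mod n = 1" using assms sucn_mod[of n] by simp
    then show ?thesis using 3 assms by auto
  qed
qed

lemma mod2_eq: fixes i n :: nat assumes "i < n" "n \<ge> 4"
  shows "(i + 2) mod n = (if i + 2 < n then i + 2 else i + 2 - n)"
proof (cases "i + 2 < n")
  case True then show ?thesis by simp
next
  case False
  then have "(i + 2) mod n = (i + 2 - n) mod n" by (simp add: le_mod_geq)
  also have "\<dots> = i + 2 - n" using assms False by simp
  finally show ?thesis using False by simp
qed

lemma mod_inj: fixes i j n :: nat assumes "i < n" "j < n" "n \<ge> 4" "(i + 2) mod n = (j + 2) mod n" shows "i = j"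
  using assms(4) mod2_eq[OF assms(1,3)] mod2_eq[OF assms(2,3)] assms(1,2) by (simp split: if_splits)

lemma wheel_proper: assumes "n \<ge> 4" shows "proper_edge_colouring (wheel n) (wc n)"
  unfolding proper_edge_colouring_def edges_def wheel_def snd_conv
proof (intro ballI impI)
  fix e f assume e: "e \<in> {{i, (i + 1) mod n} |i. i < n} \<union> {{i, n} |i. i < n}"
    and f: "f \<in> {{i, (i + 1) mod n} |i. i < n} \<union> {{i, n} |i. i < n}"
    and ef: "e \<noteq> f \<and> e \<inter> f \<noteq> {}"
  have nr: "\<And>i. i < n \<Longrightarrow> n \<notin> {i, Suc i mod n}"
  proof -
    fix i assume "i < n"
    moreover have "Suc i mod n < n" using assms by simp
    ultimately have "n \<noteq> i" "n \<noteq> Suc i mod n" by linarith+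
    then show "n \<notin> {i, Suc i mod n}" by simp
  qed
  have spoke_rim: "wc n {j, n} \<noteq> wc n {i, Suc i mod n}"
    if "i < n" "j < n" "{j, n} \<inter> {i, Suc i mod n} \<noteq> {}" for i j
  proof -
    have "j = i \<or> j = Suc i mod n \<or> n = i \<or> n = Suc i mod n" using that(3) by blast
    then have "j = i \<or> j = Suc i mod n" using nr[OF that(1)] by blast
    moreover have "wc n {j, n} = j" using wc_spoke[OF that(2)] .
    moreover have "wc n {i, Suc i mod n} = (i + 2) mod n" using wc_rim[OF that(1) assms] .
    ultimately show ?thesis using mod_facts[OF that(1) assms] by metis
  qed
  show "wc n e \<noteq> wc n f"
    using e f
  proof (elim UnE CollectE exE conjE)
    fix i j assume e': "e = {i, (i + 1) mod n}" "i < n" and f': "f = {j, (j + 1) mod n}" "j < n"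
    have "i \<noteq> j" using ef e' f' by blast
    moreover have "wc n e = (i + 2) mod n" using wc_rim[OF e'(2) assms] e'(1) by simp
    moreover have "wc n f = (j + 2) mod n" using wc_rim[OF f'(2) assms] f'(1) by simp
    ultimately show ?thesis using mod_inj[OF e'(2) f'(2) assms] by metis
  next
    fix i j assume e': "e = {i, (i + 1) mod n}" "i < n" and f': "f = {j, n}" "j < n"
    have "{j, n} \<inter> {i, Suc i mod n} \<noteq> {}" using ef e' f' by (simp add: Int_commute)
    then show ?thesis using spoke_rim[OF e'(2) f'(2)] e' f' by simp
  next
    fix i j assume e': "e = {i, n}" "i < n" and f': "f = {j, (j + 1) mod n}" "j < n"
    have "{i, n} \<inter> {j, Suc j mod n} \<noteq> {}" using ef e' f' by simp
    then show ?thesis using spoke_rim[OF f'(2) e'(2)] e' f' by simp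
  next
    fix i j assume e': "e = {i, n}" "i < n" and f': "f = {j, n}" "j < n"
    have "i \<noteq> j" using ef e' f' by blast
    then show ?thesis using wc_spoke[OF e'(2)] wc_spoke[OF f'(2)] e' f' by simp
  qed
qed

lemma wheel_range: assumes "n \<ge> 4" shows "wc n ` edges (wheel n) \<subseteq> {..<n}"
proof
  fix x assume "x \<in> wc n ` edges (wheel n)"
  then obtain e where e: "e \<in> edges (wheel n)" and x: "x = wc n e" by blast
  from e have "e \<in> {{i, (i + 1) mod n} |i. i < n} \<union> {{i, n} |i. i < n}"
    unfolding edges_def wheel_def by simp
  then show "x \<in> {..<n}"
  proof (elim UnE CollectE exE conjE)
    fix i assume "e = {i, (i + 1) mod n}" "i < n"
    then have "x = (i + 2) mod n" using x wc_rim[of i n] assms by simp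
    then show ?thesis using assms by simp
  next
    fix i assume "e = {i, n}" "i < n"
    then have "x = i" using x wc_spoke[of i n] by simp
    then show ?thesis using \<open>i < n\<close> by simp
  qed
qed

lemma spoke_in: "i < n \<Longrightarrow> {i, n} \<in> edges (wheel n)"
  unfolding edges_def wheel_def by auto

lemma verts_wheel: "verts (wheel n) = {0..n}"
  unfolding verts_def wheel_def by simp

lemma path_edges2: "path_edges [a, b] = [{a, b}]"
  unfolding path_edges_def by simp

lemma path_edges3: "path_edges [a, b, c] = [{a, b}, {b, c}]"
  unfolding path_edges_def by simp

lemma wheel_rc: assumes "n \<ge> 4" shows "rainbow_connected (wheel n) (wc n)"
  unfolding rainbow_connected_def
proof (intro ballI impI)
  fix u v assume u: "u \<in> verts (wheel n)" and v: "v \<in> verts (wheel n)" and uv: "u \<noteq> v"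
  have u': "u \<le> n" and v': "v \<le> n" using u v by (auto simp: verts_wheel)
  consider "u = n" | "v = n" | "u < n" "v < n" using u' v' uv by linarith
  then show "\<exists>p. rainbow_path (wheel n) (wc n) u v p"
  proof cases
    case 1
    then have vn: "v < n" using uv v' by simp
    have e: "{n, v} = {v, n}" by blast
    have "is_path (wheel n) u v [n, v]"
      unfolding is_path_def path_edges2 verts_wheel using 1 vn spoke_in[OF vn] e by simp
    then have "rainbow_path (wheel n) (wc n) u v [n, v]"
      unfolding rainbow_path_def path_edges2 by simp
    then show ?thesis by blast
  next
    case 2
    then have un: "u < n" using uv u' by simp
    have "is_path (wheel n) u v [u, n]"
      unfolding is_path_def path_edges2 verts_wheel using 2 un spoke_in[OF un] by simp
    then have "rainbow_path (wheel n) (wc n) u v [u, n]"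
      unfolding rainbow_path_def path_edges2 by simp
    then show ?thesis by blast
  next
    case 3
    have e: "{n, v} = {v, n}" by blast
    have "is_path (wheel n) u v [u, n, v]"
      unfolding is_path_def path_edges3 verts_wheel using 3 uv spoke_in[OF 3(1)] spoke_in[OF 3(2)] e by simp
    moreover have "distinct (map (wc n) (path_edges [u, n, v]))"
      unfolding path_edges3 e using wc_spoke[OF 3(1)] wc_spoke[OF 3(2)] uv by simp
    ultimately have "rainbow_path (wheel n) (wc n) u v [u, n, v]"
      unfolding rainbow_path_def by simp
    then show ?thesis by blast
  qed
qed

lemma lower: assumes "proper_rainbow_colouring (wheel n) k c" shows "n \<le> k"
proof -
  have pc: "proper_edge_colouring (wheel n) c" and rg: "c ` edges (wheel n) \<subseteq> {..<k}"
    using assms unfolding proper_rainbow_colouring_def by simp_all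
  let ?g = "\<lambda>i. c {i, n}"
  have inj: "inj_on ?g {..<n}"
  proof (rule inj_onI)
    fix i j assume i: "i \<in> {..<n}" and j: "j \<in> {..<n}" and eq: "c {i, n} = c {j, n}"
    show "i = j"
    proof (rule ccontr)
      assume ij: "i \<noteq> j"
      have "i \<noteq> n" using i by simp
      then have "i \<notin> {j, n}" using ij by simp
      then have ne: "{i, n} \<noteq> {j, n}" by (metis insertI1)
      have ni: "{i, n} \<inter> {j, n} \<noteq> {}" by blast
      have ei: "{i, n} \<in> edges (wheel n)" using spoke_in i by simp
      have ej: "{j, n} \<in> edges (wheel n)" using spoke_in j by simp
      have "c {i, n} \<noteq> c {j, n}"
        by (rule pc[unfolded proper_edge_colouring_def, rule_format, OF ei ej conjI[OF ne ni]])
      then show False using eq by simp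
    qed
  qed
  have "?g ` {..<n} \<subseteq> c ` edges (wheel n)"
  proof
    fix x assume "x \<in> ?g ` {..<n}"
    then obtain i where "i < n" "x = c {i, n}" by auto
    then show "x \<in> c ` edges (wheel n)" using spoke_in[of i n] by blast
  qed
  then have sub: "?g ` {..<n} \<subseteq> {..<k}" using rg by (rule subset_trans)
  have "card (?g ` {..<n}) \<le> card {..<k}" by (rule card_mono[OF _ sub]) simp
  then show ?thesis using card_image[OF inj] by simp
qed

theorem proposition5p2:
  fixes n :: nat
  assumes "n \<ge> 4"
  shows "prc (wheel n) = n"
  unfolding prc_def
proof (rule Least_equality)
  show "\<exists>c. proper_rainbow_colouring (wheel n) n c"
    using wheel_proper[OF assms] wheel_range[OF assms] wheel_rc[OF assms]
    unfolding proper_rainbow_colouring_def by blast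
next
  fix y assume "\<exists>c. proper_rainbow_colouring (wheel n) y c"
  then obtain c where "proper_rainbow_colouring (wheel n) y c" by blast
  then show "n \<le> y" by (rule lower)
qed

end
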